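(* Let $\mathcal{A}\subset\mathbb{Z}$ be a finite alphabet, let $G=(V,E)$ be a finite directed graph with edge labelling $\ell:E\to\mathcal{A}$ with $M=\sum_{a\in\mathcal{A}}M_a$ primitive, let $\beta$ be a Pisot number of degree $r$, and let $\nu$, $\mu$, $\Phi$ be as in the context. Let $z=m_0+m_1\beta+\cdots+m_{r-1}\beta^{r-1}\in\mathbb{Z}[\beta]$ with $m_0,\ldots,m_{r-1}\in\mathbb{Z}$. Then the limit $\lim_{k\to\infty}\widehat{\nu}(z\beta^k)$ exists, and it equals the Fourier coefficient $$\widehat{\psi}(m_0,\ldots,m_{r-1})=\int_{\mathbb{T}^r}e^{-2\pi i(m_0t_0+\cdots+m_{r-1}t_{r-1})}\,d\psi(t_0,\ldots,t_{r-1})$$ of the measure $\psi=\Phi_*(\mu)$ on $\mathbb{T}^r$.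
   Context: For $a\in\mathcal{A}$, $M_a$ is the $V\times V$ matrix with $(M_a)_{ij}=1$ if $(i,j)\in E$ and $\ell((i,j))=a$, and $0$ otherwise. By Perron–Frobenius, $M$ has a dominant eigenvalue $\lambda>0$ with positive left eigenvector $\mathbf v_L$ and right eigenvector $\mathbf v_R$, normalised by $\mathbf v_L^{\mathsf T}\mathbf v_R=1$. A path is a sequence of edges with the terminal vertex of each edge equal to the initial vertex of the next. $\mathcal{K}^+\subseteq\mathcal{A}^{\mathbb{N}}$ is the set of sequences $(\ell(e_k))_{k\ge1}$ for infinite paths in $G$, and $\mu^+$ the Borel probability measure on it with $\mu^+(\{x:x_1=\varepsilon_1,\ldots,x_k=\varepsilon_k\})=\lambda^{-k}\mathbf v_L^{\mathsf T}M_{\varepsilon_1}\cdots M_{\varepsilon_k}\mathbf v_R$. $\mathcal{K}\subseteq\mathcal{A}^{\mathbb{Z}}$ is the set of sequences $(\ell(e_k))_{k\in\mathbb{Z}}$ for bi-infinite paths $(e_k)_{k\in\mathbb{Z}}$ in $G$, and $\mu$ the Borel probability measure on $\mathcal{K}$ with $\mu(\{x: x_{m+1}=\varepsilon_1,\ldots,x_{m+k}=\varepsilon_k\})=\lambda^{-k}\mathbf v_L^{\mathsf T}M_{\varepsilon_1}\cdots M_{\varepsilon_k}\mathbf v_R$ for all $m\in\mathbb{Z}$. A Pisot number is an algebraic integer $>1$ all of whose other Galois conjugates have modulus $<1$ (integers $\ge2$ included). $\phi^+((x_k)_{k\ge1})=\sum_{k\ge1}x_k\beta^{-k}$, $\nu=(\phi^+)_*(\mu^+)$,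 and $\widehat{\nu}(t)=\int e^{-2\pi i x t}\,d\nu(x)$. With $\mathbb{T}=\mathbb{R}/\mathbb{Z}$, $\Phi:\mathcal{K}\to\mathbb{T}^r$ is $\Phi((x_k)_{k\in\mathbb{Z}})=\big(\sum_{k\in\mathbb{Z}}x_k\beta^{-k+m}\bmod 1\big)_{m=0}^{r-1}$, where the part of the series with $k\le0$ converges modulo $1$ because $\beta$ is Pisot (it is understood as $\lim_{n\to\infty}\sum_{k=-n}^\infty x_k\beta^{-k+m}\bmod 1$). *)

theory Defs
  imports "HOL-Probability.Probability" "HOL-Computational_Algebra.Computational_Algebra"
begin

definition label_matrix :: "('v::finite \<times> 'v) set \<Rightarrow> ('v \<times> 'v \<Rightarrow> int) \<Rightarrow> int \<Rightarrow> real^'v^'v" where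
  "label_matrix E lab a = (\<chi> i j. if (i, j) \<in> E \<and> lab (i, j) = a then 1 else 0)"

definition total_matrix :: "int set \<Rightarrow> ('v::finite \<times> 'v) set \<Rightarrow> ('v \<times> 'v \<Rightarrow> int) \<Rightarrow> real^'v^'v" where
  "total_matrix Alph E lab = (\<Sum>a\<in>Alph. label_matrix E lab a)"

definition matpow :: "real^'v::finite^'v \<Rightarrow> nat \<Rightarrow> real^'v^'v" where
  "matpow A k = ((\<lambda>B. A ** B) ^^ k) (mat 1)"

definition primitive_matrix :: "real^'v::finite^'v \<Rightarrow> bool" where
  "primitive_matrix A \<longleftrightarrow> (\<forall>i j. A $ i $ j \<ge> 0) \<and> (\<exists>k>0. \<forall>i j. matpow A k $ i $ j > 0)"

definition word_matrix :: "('v::finite \<times> 'v) set \<Rightarrow> ('v \<times> 'v \<Rightarrow> int) \<Rightarrow> int list \<Rightarrow> real^'v^'v" where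
  "word_matrix E lab ws = foldr (\<lambda>a B. label_matrix E lab a ** B) ws (mat 1)"

definition pisot_of_degree :: "real \<Rightarrow> nat \<Rightarrow> bool" where
  "pisot_of_degree \<beta> r \<longleftrightarrow> \<beta> > 1 \<and>
     (\<exists>p :: int poly. lead_coeff p = 1 \<and> irreducible p \<and> degree p = r \<and>
        poly (map_poly of_int p) \<beta> = 0 \<and>
        (\<forall>z :: complex. poly (map_poly of_int p) z = 0 \<and> z \<noteq> complex_of_real \<beta> \<longrightarrow> cmod z < 1))"

text \<open>One-sided sequences \<open>(x_k)_{k\<ge>1}\<close> are encoded as \<open>x :: nat \<Rightarrow> int\<close> with
  \<open>x i = x_{i+1}\<close>.\<close>

definition seq_space_plus :: "(nat \<Rightarrow> int) measure" where
  "seq_space_plus = PiM UNIV (\<lambda>_. count_space UNIV)"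

definition seq_space :: "(int \<Rightarrow> int) measure" where
  "seq_space = PiM UNIV (\<lambda>_. count_space UNIV)"

definition is_mu_plus ::
  "int set \<Rightarrow> ('v::finite \<times> 'v) set \<Rightarrow> ('v \<times> 'v \<Rightarrow> int) \<Rightarrow> real \<Rightarrow> real^'v \<Rightarrow> real^'v
     \<Rightarrow> (nat \<Rightarrow> int) measure \<Rightarrow> bool" where
  "is_mu_plus Alph E lab lam vL vR m \<longleftrightarrow> prob_space m \<and> sets m = sets seq_space_plus \<and>
     (\<forall>ws. set ws \<subseteq> Alph \<longrightarrow>
        measure m {x \<in> space m. \<forall>i<length ws. x i = ws ! i}
          = (1 / lam) ^ length ws * (vL \<bullet> (word_matrix E lab ws *v vR)))"

definition is_mu ::
  "int set \<Rightarrow> ('v::finite \<times> 'v) set \<Rightarrow> ('v \<times> 'v \<Rightarrow> int) \<Rightarrow> real \<Rightarrow> real^'v \<Rightarrow> real^'v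
     \<Rightarrow> (int \<Rightarrow> int) measure \<Rightarrow> bool" where
  "is_mu Alph E lab lam vL vR m \<longleftrightarrow> prob_space m \<and> sets m = sets seq_space \<and>
     (\<forall>(n::int) ws. set ws \<subseteq> Alph \<longrightarrow>
        measure m {x \<in> space m. \<forall>i<length ws. x (n + 1 + int i) = ws ! i}
          = (1 / lam) ^ length ws * (vL \<bullet> (word_matrix E lab ws *v vR)))"

definition phi_plus :: "real \<Rightarrow> (nat \<Rightarrow> int) \<Rightarrow> real" where
  "phi_plus \<beta> x = (\<Sum>i. of_int (x i) * \<beta> powi (- int (Suc i)))"

text \<open>The torus \<open>\<real>/\<int>\<close> is represented by the fundamental domain [0,1).
  A real sequence s converges modulo 1 to t iff \<open>e^{2\<pi>i s_n} \<rightarrow> e^{2\<pi>i t}\<close>.\<close>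
definition converges_mod1 :: "(nat \<Rightarrow> real) \<Rightarrow> real \<Rightarrow> bool" where
  "converges_mod1 s t \<longleftrightarrow> (\<lambda>n. cis (2 * pi * s n)) \<longlonglongrightarrow> cis (2 * pi * t)"

text \<open>\<open>\<Sum>_{k=-n}^{\<infinity>} x_k \<beta>^{-k+m}\<close> (the tail k \<ge> 1 converges as a real series).\<close>
definition partial_series :: "real \<Rightarrow> (int \<Rightarrow> int) \<Rightarrow> nat \<Rightarrow> nat \<Rightarrow> real" where
  "partial_series \<beta> x m n =
     (\<Sum>k\<in>{- int n..0}. of_int (x k) * \<beta> powi (int m - k))
     + (\<Sum>i. of_int (x (int (Suc i))) * \<beta> powi (int m - int (Suc i)))"

definition Phi_coord :: "real \<Rightarrow> (int \<Rightarrow> int) \<Rightarrow> nat \<Rightarrow> real" where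
  "Phi_coord \<beta> x m = (THE t. 0 \<le> t \<and> t < 1 \<and> converges_mod1 (partial_series \<beta> x m) t)"

definition Phi :: "real \<Rightarrow> nat \<Rightarrow> (int \<Rightarrow> int) \<Rightarrow> (nat \<Rightarrow> real)" where
  "Phi \<beta> r x = (\<lambda>m\<in>{..<r}. Phi_coord \<beta> x m)"

definition torus :: "nat \<Rightarrow> (nat \<Rightarrow> real) measure" where
  "torus r = PiM {..<r} (\<lambda>_. restrict_space lborel {0..<1})"

definition fourier_transform :: "real measure \<Rightarrow> real \<Rightarrow> complex" where
  "fourier_transform \<nu> t = (\<integral>x. cis (- 2 * pi * x * t) \<partial>\<nu>)"

definition torus_fourier_coeff :: "nat \<Rightarrow> (nat \<Rightarrow> real) measure \<Rightarrow> (nat \<Rightarrow> int) \<Rightarrow> complex" where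
  "torus_fourier_coeff r \<psi> m = (\<integral>t. cis (- 2 * pi * (\<Sum>j<r. of_int (m j) * t j)) \<partial>\<psi>)"

end

theory Submission
  imports Defs "Berlekamp_Zassenhaus.Square_Free_Int_To_Square_Free_GFp"
begin

hide_const (open) up_ring.coeff up_ring.monom module.smult
no_notation Matrix.scalar_prod (infix "\<bullet>" 70)
no_notation Matrix.vec_index (infixl "$" 100)

lemma irr_sq_free:
  assumes irr: "irreducible (p::'a::idom poly)" shows "square_free p"
proof(intro square_freeI)
  from irr show p0: "p \<noteq> 0" by auto
  fix a assume "a * a dvd p"
  then obtain b where paab: "p = a * (a * b)" by (elim dvdE, auto)
  assume "degree a > 0"
  then have a1: "\<not> a dvd 1" by (auto simp: poly_dvd_1)
  then have ab1: "\<not> a * b dvd 1" using dvd_mult_left by auto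
  from paab irr a1 ab1 show False by force
qed

lemma irr_rsquarefree:
  fixes p :: "int poly"
  assumes irr: "irreducible p"
  shows "rsquarefree (map_poly of_int p :: complex poly)"
proof -
  let ?q = "map_poly rat_of_int p"
  have "separable ?q" by (rule square_free_imp_separable[OF square_free_int_rat[OF irr_sq_free[OF irr]]])
  hence cop: "coprime ?q (pderiv ?q)" unfolding separable_def .
  hence g1: "gcd ?q (pderiv ?q) = 1" by simp
  have mm: "map_poly of_rat ?q = (map_poly of_int p :: complex poly)"
    by (simp add: map_poly_map_poly o_def)
  have "gcd (map_poly of_rat ?q) (map_poly of_rat (pderiv ?q)) = (1 :: complex poly)"
  proof -
    interpret h: field_hom' "of_rat :: rat \<Rightarrow> complex" by unfold_locales
    show ?thesis using g1 by (simp add: h.map_poly_gcd[symmetric])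
  qed
  hence g2: "gcd (map_poly of_int p) (pderiv (map_poly of_int p)) = (1 :: complex poly)"
    by (simp add: mm of_rat_hom.map_poly_pderiv)
  show ?thesis unfolding rsquarefree_roots
  proof (intro allI notI)
    fix a :: complex
    assume h: "poly (map_poly of_int p) a = 0 \<and> poly (pderiv (map_poly of_int p)) a = 0"
    hence "[:-a,1:] dvd map_poly of_int p" "[:-a,1:] dvd pderiv (map_poly of_int p)"
      by (simp_all add: poly_eq_0_iff_dvd)
    hence "[:-a,1:] dvd (1::complex poly)" using g2 by (metis gcd_greatest)
    thus False by (simp add: poly_dvd_1)
  qed
qed

fun Spoly :: "complex \<Rightarrow> nat \<Rightarrow> complex poly" where
  "Spoly z 0 = 1"
| "Spoly z (Suc n) = pCons (z ^ Suc n) (Spoly z n)"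

lemma coeff_Spoly: "coeff (Spoly z n) i = (if i \<le> n then z ^ (n - i) else 0)"
proof (induction n arbitrary: i)
  case 0 thus ?case by (cases i) auto
next
  case (Suc n) thus ?case by (cases i) (auto simp: Suc_diff_le)
qed

lemma lin_Spoly: "[:-z,1:] * Spoly z n = monom 1 (Suc n) - [:z ^ Suc n:]"
proof (induction n)
  case 0 thus ?case by (simp add: monom_Suc monom_0)
next
  case (Suc n)
  have "[:-z,1:] * Spoly z (Suc n) = [:-z,1:] * ([:z ^ Suc n:] + pCons 0 (Spoly z n))"
    by (simp add: poly_eq_iff coeff_pCons split: nat.split)
  also have "\<dots> = smult (z ^ Suc n) [:-z,1:] + pCons 0 ([:-z,1:] * Spoly z n)"
    by (simp add: algebra_simps)
  also have "\<dots> = monom 1 (Suc (Suc n)) - [:z ^ Suc (Suc n):]"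
    unfolding Suc by (simp add: poly_eq_iff coeff_monom coeff_pCons split: nat.split)
  finally show ?case .
qed

lemma newton_identity:
  fixes Z :: "complex set" and N :: nat
  assumes fin: "finite Z"
  defines "P \<equiv> (\<Prod>z\<in>Z. [:-z,1:])"
  shows "(\<Sum>i\<le>card Z. coeff P i * (if card Z - i \<le> N then (\<Sum>z\<in>Z. z ^ (N - (card Z - i))) else 0))
       = (if N < card Z then of_nat (card Z - N) * coeff P (card Z - N) else 0)"
proof -
  define r where "r = card Z"
  define Q where "Q z = (\<Prod>w\<in>Z-{z}. [:-w,1:])" for z
  have PQ: "P = [:-z,1:] * Q z" if "z \<in> Z" for z
    unfolding P_def Q_def using prod.remove[OF fin that, of "\<lambda>z. [:-z,1:]"] by simp
  have degQ: "degree (Q z) \<le> r - 1" if "z \<in> Z" for z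
  proof -
    have "degree (Q z) \<le> (\<Sum>w\<in>Z-{z}. degree [:-w,1:])" unfolding Q_def by (rule eq_imp_le, rule degree_prod_sum_eq) auto
    also have "\<dots> = card (Z - {z})" by simp
    also have "\<dots> = r - 1" using fin that by (simp add: r_def)
    finally show ?thesis .
  qed
  have rpos: "r \<ge> 1" if "z \<in> Z" for z using fin that by (auto simp: r_def Suc_le_eq card_gt_0_iff)
  have coefQ: "coeff (Q z) r = 0" if "z \<in> Z" for z
    using degQ[OF that] rpos[OF that] by (intro coeff_eq_0) linarith
  have dP: "pderiv P = (\<Sum>z\<in>Z. Q z)"
    unfolding P_def Q_def pderiv_prod by (simp add: pderiv_pCons)
  have eq1: "P * Spoly z N = monom 1 (Suc N) * Q z - smult (z ^ Suc N) (Q z)" if "z \<in> Z" for z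
  proof -
    have "P * Spoly z N = Q z * ([:-z,1:] * Spoly z N)" unfolding PQ[OF that] by (simp only: mult_ac)
    also have "\<dots> = monom 1 (Suc N) * Q z - smult (z ^ Suc N) (Q z)"
      unfolding lin_Spoly by (simp add: algebra_simps)
    finally show ?thesis .
  qed
  have "coeff (\<Sum>z\<in>Z. P * Spoly z N) r = coeff (\<Sum>z\<in>Z. monom 1 (Suc N) * Q z - smult (z ^ Suc N) (Q z)) r"
    using eq1 by (simp cong: sum.cong)
  also have "\<dots> = coeff (monom 1 (Suc N) * pderiv P) r"
    using coefQ by (simp add: dP coeff_sum sum_subtractf sum_distrib_left)
  also have "\<dots> = (if N < r then of_nat (r - N) * coeff P (r - N) else 0)"
    by (auto simp: coeff_monom_mult coeff_pderiv Suc_diff_Suc)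
  finally have A: "coeff (\<Sum>z\<in>Z. P * Spoly z N) r = (if N < r then of_nat (r - N) * coeff P (r - N) else 0)" .
  have "coeff (\<Sum>z\<in>Z. P * Spoly z N) r = (\<Sum>z\<in>Z. \<Sum>i\<le>r. coeff P i * coeff (Spoly z N) (r - i))"
    by (simp add: coeff_sum coeff_mult)
  also have "\<dots> = (\<Sum>i\<le>r. \<Sum>z\<in>Z. coeff P i * coeff (Spoly z N) (r - i))"
    by (rule sum.swap)
  also have "\<dots> = (\<Sum>i\<le>r. coeff P i * (if r - i \<le> N then (\<Sum>z\<in>Z. z ^ (N - (r - i))) else 0))"
    by (intro sum.cong refl) (auto simp: coeff_Spoly sum_distrib_left)
  finally have B: "coeff (\<Sum>z\<in>Z. P * Spoly z N) r = (\<Sum>i\<le>r. coeff P i * (if r - i \<le> N then (\<Sum>z\<in>Z. z ^ (N - (r - i))) else 0))" .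
  have "(\<Sum>i\<le>r. coeff P i * (if r - i \<le> N then (\<Sum>z\<in>Z. z ^ (N - (r - i))) else 0)) = (if N < r then of_nat (r - N) * coeff P (r - N) else 0)"
    using A B by simp
  thus ?thesis unfolding r_def .
qed

lemma power_sums_Ints:
  fixes Z :: "complex set"
  assumes fin: "finite Z" and ints: "\<And>i. coeff (\<Prod>z\<in>Z. [:-z,1:]) i \<in> \<int>"
  shows "(\<Sum>z\<in>Z. z ^ N) \<in> \<int>"
proof (induction N rule: less_induct)
  case (less N)
  define P where "P = (\<Prod>z\<in>Z. [:-z,1:])"
  define r where "r = card Z"
  define s where "s n = (\<Sum>z\<in>Z. z ^ n)" for n
  have degP: "degree P = r" unfolding P_def r_def by (subst degree_prod_sum_eq) auto
  have lcP: "coeff P r = 1"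
  proof -
    have "coeff P r = lead_coeff P" using degP by simp
    also have "\<dots> = (\<Prod>z\<in>Z. lead_coeff [:-z,1:])" unfolding P_def by (rule lead_coeff_prod)
    also have "\<dots> = 1" by simp
    finally show ?thesis .
  qed
  have NI: "(\<Sum>i\<le>r. coeff P i * (if r - i \<le> N then s (N - (r - i)) else 0))
       = (if N < r then of_nat (r - N) * coeff P (r - N) else 0)"
    using newton_identity[OF fin, of N] unfolding P_def r_def s_def .
  have split: "(\<Sum>i\<le>r. coeff P i * (if r - i \<le> N then s (N - (r - i)) else 0))
     = s N + (\<Sum>i<r. coeff P i * (if r - i \<le> N then s (N - (r - i)) else 0))"
  proof -
    have "{..r} = insert r {..<r}" by auto
    thus ?thesis using lcP by simp
  qed
  have "(\<Sum>i<r. coeff P i * (if r - i \<le> N then s (N - (r - i)) else 0)) \<in> \<int>"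
  proof (intro Ints_sum)
    fix i assume "i \<in> {..<r}"
    hence "r - i \<le> N \<Longrightarrow> N - (r - i) < N" by auto
    hence "r - i \<le> N \<Longrightarrow> s (N - (r - i)) \<in> \<int>" using less unfolding s_def by blast
    thus "coeff P i * (if r - i \<le> N then s (N - (r - i)) else 0) \<in> \<int>"
    proof -
      have "coeff P i \<in> \<int>" using ints unfolding P_def by blast
      thus ?thesis using \<open>r - i \<le> N \<Longrightarrow> s (N - (r - i)) \<in> \<int>\<close> by (cases "r - i \<le> N") (simp_all add: Ints_mult)
    qed
  qed
  moreover have "(if N < r then of_nat (r - N) * coeff P (r - N) else 0) \<in> \<int>"
  proof -
    have "coeff P (r - N) \<in> \<int>" using ints unfolding P_def by blast
    thus ?thesis by (simp add: Ints_mult)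
  qed
  ultimately have "(if N < r then of_nat (r - N) * coeff P (r - N) else 0) - (\<Sum>i<r. coeff P i * (if r - i \<le> N then s (N - (r - i)) else 0)) \<in> \<int>"
    by (intro Ints_diff)
  moreover have "s N = (if N < r then of_nat (r - N) * coeff P (r - N) else 0) - (\<Sum>i<r. coeff P i * (if r - i \<le> N then s (N - (r - i)) else 0))"
    using NI split by (simp add: eq_diff_eq)
  ultimately have "s N \<in> \<int>" by simp
  thus ?case unfolding s_def .
qed

lemma pisot_approx:
  assumes "pisot_of_degree \<beta> r"
  shows "\<exists>T::nat\<Rightarrow>int. \<exists>C \<rho>. 0 \<le> \<rho> \<and> \<rho> < 1 \<and> 0 \<le> C \<and> (\<forall>j. \<bar>\<beta> ^ j - of_int (T j)\<bar> \<le> C * \<rho> ^ j)"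
proof -
  obtain p :: "int poly" where lc: "lead_coeff p = 1" and irr: "irreducible p" and dg: "degree p = r"
    and rootb: "poly (map_poly of_int p) \<beta> = (0::real)"
    and others: "\<forall>z :: complex. poly (map_poly of_int p) z = 0 \<and> z \<noteq> complex_of_real \<beta> \<longrightarrow> cmod z < 1"
    using assms unfolding pisot_of_degree_def by blast
  define P where "P = (map_poly of_int p :: complex poly)"
  define Z where "Z = {z. poly P z = 0}"
  define b where "b = complex_of_real \<beta>"
  have P0: "P \<noteq> 0" using lc unfolding P_def by auto
  have finZ: "finite Z" unfolding Z_def using P0 by (rule poly_roots_finite)
  have rsq: "rsquarefree P" unfolding P_def by (rule irr_rsquarefree[OF irr])
  have lcP: "lead_coeff P = 1" unfolding P_def using lc by simp
  have Pprod: "P = (\<Prod>z\<in>Z. [:-z,1:])"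
    using complex_poly_decompose_rsquarefree[OF rsq] lcP unfolding Z_def by simp
  have ints: "coeff (\<Prod>z\<in>Z. [:-z,1:]) i \<in> \<int>" for i
    unfolding Pprod[symmetric] P_def by simp
  have "poly P b = of_real (poly (map_poly of_int p) \<beta>)"
  proof -
    have "P = map_poly of_real (map_poly of_int p :: real poly)"
      unfolding P_def by (simp add: map_poly_map_poly o_def)
    thus ?thesis unfolding b_def by (simp add: of_real_hom.poly_map_poly)
  qed
  hence bZ: "b \<in> Z" using rootb unfolding Z_def by simp
  have small: "cmod z < 1" if "z \<in> Z - {b}" for z
    using others that unfolding Z_def P_def b_def by auto
  define \<rho> where "\<rho> = Max (insert 0 (cmod ` (Z - {b})))"
  have \<rho>0: "0 \<le> \<rho>" unfolding \<rho>_def using finZ by simp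
  have \<rho>1: "\<rho> < 1" unfolding \<rho>_def using finZ small by simp
  have \<rho>ge: "cmod z \<le> \<rho>" if "z \<in> Z - {b}" for z unfolding \<rho>_def using finZ that by simp
  have "\<forall>j. \<exists>t::int. (\<Sum>z\<in>Z. z ^ j) = of_int t"
    using power_sums_Ints[OF finZ ints] by (metis Ints_cases)
  then obtain T :: "nat \<Rightarrow> int" where T: "\<And>j. (\<Sum>z\<in>Z. z ^ j) = of_int (T j)" by metis
  have bound: "\<bar>\<beta> ^ j - of_int (T j)\<bar> \<le> real (card Z) * \<rho> ^ j" for j
  proof -
    have "(\<Sum>z\<in>Z. z ^ j) = b ^ j + (\<Sum>z\<in>Z - {b}. z ^ j)"
      using sum.remove[OF finZ bZ] by simp
    hence "of_real (\<beta> ^ j - of_int (T j)) = - (\<Sum>z\<in>Z - {b}. z ^ j)"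
      using T[of j] unfolding b_def by simp
    hence "\<bar>\<beta> ^ j - of_int (T j)\<bar> = cmod (\<Sum>z\<in>Z - {b}. z ^ j)"
      by (metis norm_minus_cancel norm_of_real)
    also have "\<dots> \<le> (\<Sum>z\<in>Z - {b}. cmod z ^ j)"
      by (rule order_trans[OF norm_sum]) (simp add: norm_power)
    also have "\<dots> \<le> (\<Sum>z\<in>Z - {b}. \<rho> ^ j)"
      by (intro sum_mono power_mono \<rho>ge) auto
    also have "\<dots> = real (card (Z - {b})) * \<rho> ^ j" by simp
    also have "\<dots> \<le> real (card Z) * \<rho> ^ j"
      using \<rho>0 finZ by (intro mult_right_mono) (auto intro: card_mono)
    finally show ?thesis .
  qed
  show ?thesis using \<rho>0 \<rho>1 bound by (intro exI[of _ T] exI[of _ "real (card Z)"] exI[of _ \<rho>]) auto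
qed

lemma cis_unique01:
  assumes "0 \<le> a" "a < 1" "0 \<le> b" "b < 1" "cis (2 * pi * a) = cis (2 * pi * b)"
  shows "a = b"
proof -
  have "cis (2 * pi * (a - b)) = 1"
  proof -
    have "cis (2 * pi * (a - b)) = cis (2 * pi * a) / cis (2 * pi * b)"
      by (simp add: cis_divide right_diff_distrib)
    thus ?thesis using assms(5) by simp
  qed
  hence "cos (2 * pi * (a - b)) = 1" by (metis cis.sel(1) one_complex.sel(1))
  then obtain n :: int where n: "2 * pi * (a - b) = of_int n * 2 * pi" by (auto simp: cos_one_2pi_int)
  hence "a - b = of_int n" by simp
  moreover have "\<bar>a - b\<bar> < 1" using assms by auto
  ultimately have "n = 0" by linarith
  thus ?thesis using \<open>a - b = of_int n\<close> by simp
qed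

lemma cis_int_shift: "cis (2 * pi * (x + of_int k)) = cis (2 * pi * x)"
proof -
  have "cis (2 * pi * (x + of_int k)) = cis (2 * pi * x) * cis (2 * pi * of_int k)"
    by (simp add: cis_mult algebra_simps)
  also have "cis (2 * pi * of_int k) = 1" by (rule cis_multiple_2pi) simp
  finally show ?thesis by simp
qed

lemma cis_frac: "cis (2 * pi * frac x) = cis (2 * pi * x)"
  using cis_int_shift[of "frac x" "\<lfloor>x\<rfloor>"] by (simp add: frac_def)

lemma converges_mod1_THE:
  assumes "converges_mod1 s L"
  defines "t \<equiv> THE t. 0 \<le> t \<and> t < 1 \<and> converges_mod1 s t"
  shows "0 \<le> t \<and> t < 1 \<and> converges_mod1 s t \<and> cis (2 * pi * t) = cis (2 * pi * L)"
proof -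
  define t0 where "t0 = frac L"
  have c0: "converges_mod1 s t0" using assms(1) unfolding converges_mod1_def t0_def cis_frac .
  have P: "0 \<le> t0 \<and> t0 < 1 \<and> converges_mod1 s t0" using c0 unfolding t0_def by (simp add: frac_lt_1)
  have U: "x = t0" if "0 \<le> x \<and> x < 1 \<and> converges_mod1 s x" for x
  proof -
    have "cis (2 * pi * x) = cis (2 * pi * t0)"
      using that c0 unfolding converges_mod1_def by (metis LIMSEQ_unique)
    thus ?thesis using that P cis_unique01 by blast
  qed
  have "t = t0" unfolding t_def using P U by (rule the_equality)
  thus ?thesis using P by (simp add: t0_def cis_frac)
qed

lemma sum_neg_int_reindex:
  "(\<Sum>k\<in>{- int n..0}. g k) = (\<Sum>j\<le>n. g (- int j))"
  by (rule sum.reindex_bij_witness[of _ "\<lambda>j. - int j" "\<lambda>k. nat (- k)"]) auto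

lemma partial_series_conv_mod1:
  assumes pis: "pisot_of_degree \<beta> r" and bnd: "\<And>k. \<bar>y k\<bar> \<le> B"
  shows "\<exists>L. converges_mod1 (partial_series \<beta> y l) L"
proof -
  obtain T :: "nat \<Rightarrow> int" and C \<rho> where \<rho>: "0 \<le> \<rho>" "\<rho> < 1" "0 \<le> C"
    and T: "\<And>j. \<bar>\<beta> ^ j - of_int (T j)\<bar> \<le> C * \<rho> ^ j"
    using pisot_approx[OF pis] by blast
  have b1: "\<beta> > 1" using pis unfolding pisot_of_degree_def by auto
  define d where "d j = \<beta> ^ j - of_int (T j)" for j
  define a where "a j = of_int (y (- int j)) * d (l + j)" for j
  have B0: "0 \<le> real_of_int B" using bnd[of 0] by linarith
  have na: "norm (a j) \<le> (of_int B * C * \<rho> ^ l) * \<rho> ^ j" for j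
  proof -
    have "norm (a j) = \<bar>of_int (y (- int j))\<bar> * \<bar>d (l + j)\<bar>" unfolding a_def by (simp add: abs_mult)
    also have "\<dots> \<le> of_int B * (C * \<rho> ^ (l + j))"
      using bnd[of "- int j"] T[of "l + j"] unfolding d_def
      by (intro mult_mono) (auto simp del: of_int_abs simp add: of_int_abs[symmetric])
    also have "\<dots> = (of_int B * C * \<rho> ^ l) * \<rho> ^ j" by (simp add: power_add)
    finally show ?thesis .
  qed
  have sg: "summable (\<lambda>j. (of_int B * C * \<rho> ^ l) * \<rho> ^ j)"
    using \<rho> by (intro summable_mult summable_geometric) simp
  have sa: "summable a" by (rule summable_comparison_test[OF _ sg]) (use na in auto)
  define \<tau> where "\<tau> = (\<Sum>i. of_int (y (int (Suc i))) * \<beta> powi (int l - int (Suc i)))"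
  define I where "I n = (\<Sum>j\<le>n. y (- int j) * T (l + j))" for n
  have eq: "partial_series \<beta> y l n = of_int (I n) + ((\<Sum>j\<le>n. a j) + \<tau>)" for n
  proof -
    have "(\<Sum>k\<in>{- int n..0}. of_int (y k) * \<beta> powi (int l - k))
        = (\<Sum>j\<le>n. of_int (y (- int j)) * \<beta> powi (int l - (- int j)))"
      by (rule sum_neg_int_reindex)
    also have "\<dots> = (\<Sum>j\<le>n. of_int (y (- int j)) * \<beta> ^ (l + j))"
    proof (intro sum.cong refl)
      fix j
      have "int l - (- int j) = int (l + j)" by simp
      thus "of_int (y (- int j)) * \<beta> powi (int l - (- int j)) = of_int (y (- int j)) * \<beta> ^ (l + j)"
        by (simp only: power_int_of_nat)
    qed
    also have "\<dots> = (\<Sum>j\<le>n. of_int (y (- int j) * T (l + j)) + a j)"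
      unfolding a_def d_def by (intro sum.cong refl) (simp add: algebra_simps)
    also have "\<dots> = of_int (I n) + (\<Sum>j\<le>n. a j)"
      unfolding I_def by (simp add: sum.distrib)
    finally show ?thesis unfolding partial_series_def \<tau>_def by simp
  qed
  have "(\<lambda>n. cis (2 * pi * ((\<Sum>j\<le>n. a j) + \<tau>))) \<longlonglongrightarrow> cis (2 * pi * (suminf a + \<tau>))"
    by (intro tendsto_intros summable_LIMSEQ' sa)
  moreover have "cis (2 * pi * partial_series \<beta> y l n) = cis (2 * pi * ((\<Sum>j\<le>n. a j) + \<tau>))" for n
    unfolding eq using cis_int_shift[of "(\<Sum>j\<le>n. a j) + \<tau>" "I n"] by (simp add: add.commute)
  ultimately show ?thesis unfolding converges_mod1_def by (intro exI[of _ "suminf a + \<tau>"]) simp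
qed

lemma matrix_add_rdistrib': "((A::real^'n::finite^'m::finite) + B) ** (C::real^'p::finite^'n) = A ** C + B ** C"
  by (vector matrix_matrix_mult_def sum.distrib[symmetric] field_simps)

lemma matrix_sum_rdistrib:
  fixes f :: "'a \<Rightarrow> real^'n::finite^'m::finite" and C :: "real^'p::finite^'n"
  shows "(\<Sum>a\<in>A. f a) ** C = (\<Sum>a\<in>A. f a ** C)"
  by (induction A rule: infinite_finite_induct) (auto simp: matrix_add_rdistrib')

lemma matrix_sum_ldistrib:
  fixes f :: "'a \<Rightarrow> real^'p::finite^'n::finite" and C :: "real^'n^'m::finite"
  shows "C ** (\<Sum>a\<in>A. f a) = (\<Sum>a\<in>A. C ** f a)"
  by (induction A rule: infinite_finite_induct) (auto simp: matrix_add_ldistrib)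

definition words :: "int set \<Rightarrow> nat \<Rightarrow> int list set" where
  "words A n = {w. set w \<subseteq> A \<and> length w = n}"

lemma words_0: "words A 0 = {[]}" by (auto simp: words_def)

lemma words_Suc: "words A (Suc n) = (\<lambda>(a, w). a # w) ` (A \<times> words A n)"
  by (auto simp: words_def length_Suc_conv image_iff)

lemma finite_words: "finite A \<Longrightarrow> finite (words A n)"
  by (induction n) (auto simp: words_0 words_Suc)

lemma word_matrix_Cons: "word_matrix E lab (a # w) = label_matrix E lab a ** word_matrix E lab w"
  by (simp add: word_matrix_def)

lemma matpow_Suc: "matpow A (Suc n) = A ** matpow A n"
  by (simp add: matpow_def)

lemma sum_word_matrix:
  assumes "finite Alph"
  shows "(\<Sum>w\<in>words Alph n. word_matrix E lab w) = matpow (total_matrix Alph E lab) n"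
proof (induction n)
  case 0 thus ?case by (simp add: words_0 word_matrix_def matpow_def)
next
  case (Suc n)
  have inj: "inj_on (\<lambda>(a, w). a # w) (Alph \<times> words Alph n)" by (auto simp: inj_on_def)
  have "(\<Sum>w\<in>words Alph (Suc n). word_matrix E lab w)
      = (\<Sum>(a, w)\<in>Alph \<times> words Alph n. label_matrix E lab a ** word_matrix E lab w)"
    unfolding words_Suc by (subst sum.reindex[OF inj]) (simp add: case_prod_unfold word_matrix_Cons)
  also have "\<dots> = (\<Sum>a\<in>Alph. \<Sum>w\<in>words Alph n. label_matrix E lab a ** word_matrix E lab w)"
    by (rule sum.cartesian_product[symmetric])
  also have "\<dots> = (\<Sum>a\<in>Alph. label_matrix E lab a ** matpow (total_matrix Alph E lab) n)"
    by (simp add: matrix_sum_ldistrib[symmetric] Suc)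
  also have "\<dots> = matpow (total_matrix Alph E lab) (Suc n)"
    by (simp add: matpow_Suc total_matrix_def matrix_sum_rdistrib)
  finally show ?case .
qed

lemma matpow_eigen:
  assumes "A *v v = lam *\<^sub>R v"
  shows "matpow A n *v v = (lam ^ n) *\<^sub>R v"
proof (induction n)
  case 0 thus ?case by (simp add: matpow_def)
next
  case (Suc n)
  have "matpow A (Suc n) *v v = A *v (matpow A n *v v)"
    by (simp add: matpow_Suc matrix_vector_mul_assoc)
  also have "\<dots> = (lam ^ Suc n) *\<^sub>R v" using assms by (simp add: Suc matrix_vector_mult_scaleR)
  finally show ?case .
qed

lemma matrix_vector_sum_rdistrib:
  fixes f :: "'a \<Rightarrow> real^'n::finite^'m::finite"
  shows "(\<Sum>a\<in>A. f a) *v v = (\<Sum>a\<in>A. f a *v v)"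
  by (induction A rule: infinite_finite_induct) (auto simp: matrix_vector_mult_add_rdistrib)

definition cyl :: "int list \<Rightarrow> (nat \<Rightarrow> int) set" where
  "cyl w = {x. \<forall>i<length w. x i = w ! i}"

lemma space_seq_space_plus: "space seq_space_plus = UNIV"
  by (simp add: seq_space_plus_def space_PiM)

lemma space_seq_space: "space seq_space = UNIV"
  by (simp add: seq_space_def space_PiM)

lemma cyl_sets: "cyl w \<in> sets seq_space_plus"
proof -
  have "cyl w = {x \<in> space seq_space_plus. \<forall>i<length w. x i = w ! i}"
    by (simp add: cyl_def space_seq_space_plus)
  also have "\<dots> \<in> sets seq_space_plus" unfolding seq_space_plus_def by measurable
  finally show ?thesis .
qed

lemma words_cyl_union: "{x. \<forall>i<n. x i \<in> A} = (\<Union>w\<in>words A n. cyl w)"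
proof (intro equalityI subsetI)
  fix x assume "x \<in> {x. \<forall>i<n. x i \<in> A}"
  hence "map x [0..<n] \<in> words A n" "x \<in> cyl (map x [0..<n])" by (auto simp: words_def cyl_def)
  thus "x \<in> (\<Union>w\<in>words A n. cyl w)" by blast
qed (auto simp: words_def cyl_def)

lemma cyl_disjoint: "length w = length w' \<Longrightarrow> w \<noteq> w' \<Longrightarrow> cyl w \<inter> cyl w' = {}"
  by (auto simp: cyl_def intro: nth_equalityI)

lemma disjoint_words: "disjoint_family_on cyl (words A n)"
  unfolding disjoint_family_on_def using cyl_disjoint by (auto simp: words_def)

lemma AE_alph:
  fixes m :: "(nat \<Rightarrow> int) measure"
  assumes ps: "prob_space m" and sm: "sets m = sets seq_space_plus" and fin: "finite Alph"
    and cylf: "\<And>ws. set ws \<subseteq> Alph \<Longrightarrow> measure m (cyl ws) = (1 / lam) ^ length ws * (vL \<bullet> (word_matrix E lab ws *v vR))"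
    and lam: "lam > 0" and ev: "total_matrix Alph E lab *v vR = lam *\<^sub>R vR" and one: "vL \<bullet> vR = 1"
  shows "AE x in m. \<forall>i. x i \<in> Alph"
proof -
  interpret prob_space m by (rule ps)
  have cs: "cyl w \<in> sets m" for w using cyl_sets sm by simp
  have "AE x in m. x \<in> {x. \<forall>i<n. x i \<in> Alph}" for n
  proof (rule AE_prob_1)
    have "prob {x. \<forall>i<n. x i \<in> Alph} = prob (\<Union>w\<in>words Alph n. cyl w)" by (simp add: words_cyl_union)
    also have "\<dots> = (\<Sum>w\<in>words Alph n. prob (cyl w))"
      using finite_words[OF fin] cs disjoint_words by (intro finite_measure_finite_Union) auto
    also have "\<dots> = (\<Sum>w\<in>words Alph n. (1 / lam) ^ n * (vL \<bullet> (word_matrix E lab w *v vR)))"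
      by (intro sum.cong refl) (auto simp: cylf words_def)
    also have "\<dots> = (1 / lam) ^ n * (vL \<bullet> ((\<Sum>w\<in>words Alph n. word_matrix E lab w) *v vR))"
      by (simp add: sum_distrib_left inner_sum_right matrix_vector_sum_rdistrib)
    also have "\<dots> = 1"
      using lam by (simp add: sum_word_matrix[OF fin] matpow_eigen[OF ev] one power_one_over)
    finally show "prob {x. \<forall>i<n. x i \<in> Alph} = 1" .
  qed
  hence "AE x in m. \<forall>n. x \<in> {x. \<forall>i<n. x i \<in> Alph}" by (subst AE_all_countable) auto
  thus ?thesis by eventually_elim auto
qed

lemma sets_seq_space_plus_gen:
  "sets seq_space_plus = sigma_sets UNIV (prod_algebra UNIV (\<lambda>_::nat. count_space (UNIV::int set)))"
  unfolding seq_space_plus_def sets_PiM by (simp add: PiE_UNIV_domain)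

lemma seq_measure_eqI:
  fixes M N :: "(nat \<Rightarrow> int) measure"
  assumes psM: "prob_space M" and psN: "prob_space N"
    and sM: "sets M = sets seq_space_plus" and sN: "sets N = sets seq_space_plus"
    and eq: "\<And>w. emeasure M (cyl w) = emeasure N (cyl w)"
  shows "M = N"
proof (rule measure_eqI_generator_eq[where \<Omega>=UNIV and E="prod_algebra UNIV (\<lambda>_::nat. count_space (UNIV::int set))" and A="\<lambda>_. UNIV"])
  show "Int_stable (prod_algebra UNIV (\<lambda>_::nat. count_space (UNIV::int set)))" by (rule Int_stable_prod_algebra)
  show "prod_algebra UNIV (\<lambda>_::nat. count_space (UNIV::int set)) \<subseteq> Pow UNIV" by simp
  show "sets M = sigma_sets UNIV (prod_algebra UNIV (\<lambda>_. count_space UNIV))" using sM sets_seq_space_plus_gen by simp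
  show "sets N = sigma_sets UNIV (prod_algebra UNIV (\<lambda>_. count_space UNIV))" using sN sets_seq_space_plus_gen by simp
  show "range (\<lambda>_. UNIV) \<subseteq> prod_algebra UNIV (\<lambda>_::nat. count_space (UNIV::int set))"
    using space_in_prod_algebra[of UNIV "\<lambda>_::nat. count_space (UNIV::int set)"] by (simp add: PiE_UNIV_domain)
  show "(\<Union>i::nat. UNIV) = UNIV" by simp
  show "emeasure M UNIV \<noteq> \<infinity>" for i::nat
    using prob_space.emeasure_space_1[OF psM] sets_eq_imp_space_eq[OF sM] space_seq_space_plus by simp
next
  fix X assume "X \<in> prod_algebra UNIV (\<lambda>_::nat. count_space (UNIV::int set))"
  then obtain J F where X: "X = prod_emb UNIV (\<lambda>_::nat. count_space (UNIV::int set)) J (Pi\<^sub>E J F)"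
    and finJ: "finite J"
    by (auto elim!: prod_algebraE)
  define n where "n = Suc (Max J)"
  have Jn: "j \<in> J \<Longrightarrow> j < n" for j using finJ unfolding n_def by (simp add: le_imp_less_Suc)
  define W where "W = {w. length w = n \<and> (\<forall>j\<in>J. w ! j \<in> F j)}"
  have Xeq: "X = (\<Union>w\<in>W. cyl w)"
  proof (intro equalityI subsetI)
    fix x assume "x \<in> X"
    hence xF: "\<forall>j\<in>J. x j \<in> F j" unfolding X by (auto simp: prod_emb_iff)
    hence "map x [0..<n] \<in> W" "x \<in> cyl (map x [0..<n])" using Jn by (auto simp: W_def cyl_def)
    thus "x \<in> (\<Union>w\<in>W. cyl w)" by blast
  next
    fix x assume "x \<in> (\<Union>w\<in>W. cyl w)"
    then obtain w where "w \<in> W" "x \<in> cyl w" by blast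
    hence "\<forall>j\<in>J. x j \<in> F j" using Jn by (auto simp: W_def cyl_def)
    thus "x \<in> X" unfolding X by (auto simp: prod_emb_iff extensional_def)
  qed
  have cW: "countable W" by (rule countable_subset[of _ UNIV]) simp_all
  have dW: "disjoint_family_on cyl W" unfolding disjoint_family_on_def using cyl_disjoint by (auto simp: W_def)
  have "emeasure M X = (\<integral>\<^sup>+w. emeasure M (cyl w) \<partial>count_space W)"
    unfolding Xeq using cyl_sets sM by (intro emeasure_UN_countable cW dW) auto
  also have "\<dots> = (\<integral>\<^sup>+w. emeasure N (cyl w) \<partial>count_space W)" by (simp add: eq)
  also have "\<dots> = emeasure N X"
    unfolding Xeq using cyl_sets sN by (intro emeasure_UN_countable[symmetric] cW dW) auto
  finally show "emeasure M X = emeasure N X" .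
qed

definition shiftm :: "int \<Rightarrow> (int \<Rightarrow> int) \<Rightarrow> (nat \<Rightarrow> int)" where
  "shiftm a y = (\<lambda>i. y (int i + a))"

lemma shiftm_meas:
  assumes "sets M = sets seq_space"
  shows "shiftm a \<in> measurable M seq_space_plus"
proof -
  have "shiftm a \<in> measurable seq_space seq_space_plus"
    unfolding shiftm_def seq_space_plus_def
  proof (rule measurable_PiM_single')
    fix i :: nat
    show "(\<lambda>y. y (int i + a)) \<in> measurable seq_space (count_space UNIV)"
      unfolding seq_space_def by (rule measurable_component_singleton) simp
  qed (simp add: space_PiM)
  thus ?thesis by (subst measurable_cong_sets[OF assms refl])
qed

lemma pred_all_alph: "{x \<in> space seq_space_plus. \<forall>i. x i \<in> A} \<in> sets seq_space_plus"
  unfolding seq_space_plus_def by measurable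

lemma cyl_null:
  assumes ps: "prob_space M" and sM: "sets M = sets seq_space_plus" and ae: "AE x in M. \<forall>i. x i \<in> A"
    and nw: "\<not> set w \<subseteq> A"
  shows "emeasure M (cyl w) = 0"
proof -
  have "AE x in M. x \<notin> cyl w" using ae
  proof eventually_elim
    case (elim x)
    obtain i where i: "i < length w" "w ! i \<notin> A" using nw by (metis in_set_conv_nth subsetI)
    thus ?case using elim unfolding cyl_def by (metis (mono_tags, lifting) mem_Collect_eq)
  qed
  thus ?thesis using cyl_sets sM by (subst AE_iff_measurable[symmetric]) (auto simp: sets_eq_imp_space_eq space_seq_space_plus)
qed

lemma mu_plus_facts:
  assumes fin: "finite Alph" and lam: "lam > 0" and ev: "total_matrix Alph E lab *v vR = lam *\<^sub>R vR"
    and one: "vL \<bullet> vR = 1" and mp: "is_mu_plus Alph E lab lam vL vR \<mu>p"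
  shows "AE x in \<mu>p. \<forall>i. x i \<in> Alph"
proof -
  have ps: "prob_space \<mu>p" and s: "sets \<mu>p = sets seq_space_plus" using mp by (auto simp: is_mu_plus_def)
  have sp: "space \<mu>p = UNIV" using s by (simp add: sets_eq_imp_space_eq space_seq_space_plus)
  show ?thesis
    by (rule AE_alph[OF ps s fin _ lam ev one]) (use mp sp in \<open>auto simp: is_mu_plus_def cyl_def\<close>)
qed

lemma mu_facts:
  assumes fin: "finite Alph" and lam: "lam > 0" and ev: "total_matrix Alph E lab *v vR = lam *\<^sub>R vR"
    and one: "vL \<bullet> vR = 1" and mp: "is_mu_plus Alph E lab lam vL vR \<mu>p"
    and mu: "is_mu Alph E lab lam vL vR \<mu>"
  shows "AE y in \<mu>. \<forall>k. y k \<in> Alph" and "distr \<mu> seq_space_plus (shiftm a) = \<mu>p"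
proof -
  have ps: "prob_space \<mu>" and s: "sets \<mu> = sets seq_space" using mu by (auto simp: is_mu_def)
  have sp: "space \<mu> = UNIV" using s by (simp add: sets_eq_imp_space_eq space_seq_space)
  have psp: "prob_space \<mu>p" and sps: "sets \<mu>p = sets seq_space_plus" using mp by (auto simp: is_mu_plus_def)
  have spp: "space \<mu>p = UNIV" using sps by (simp add: sets_eq_imp_space_eq space_seq_space_plus)
  have meas: "shiftm b \<in> measurable \<mu> seq_space_plus" for b by (rule shiftm_meas[OF s])
  have psd: "prob_space (distr \<mu> seq_space_plus (shiftm b))" for b
    by (rule prob_space.prob_space_distr[OF ps meas])
  have sd: "sets (distr \<mu> seq_space_plus (shiftm b)) = sets seq_space_plus" for b by simp
  have cylf: "measure (distr \<mu> seq_space_plus (shiftm b)) (cyl ws) = (1 / lam) ^ length ws * (vL \<bullet> (word_matrix E lab ws *v vR))"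
    if "set ws \<subseteq> Alph" for ws b
  proof -
    have "measure (distr \<mu> seq_space_plus (shiftm b)) (cyl ws) = measure \<mu> (shiftm b -` cyl ws \<inter> space \<mu>)"
      by (rule measure_distr[OF meas cyl_sets])
    also have "shiftm b -` cyl ws \<inter> space \<mu> = {x \<in> space \<mu>. \<forall>i<length ws. x ((b - 1) + 1 + int i) = ws ! i}"
      by (auto simp: shiftm_def cyl_def sp add.commute)
    also have "measure \<mu> \<dots> = (1 / lam) ^ length ws * (vL \<bullet> (word_matrix E lab ws *v vR))"
      using mu that unfolding is_mu_def by blast
    finally show ?thesis .
  qed
  have aed: "AE x in distr \<mu> seq_space_plus (shiftm b). \<forall>i. x i \<in> Alph" for b
    by (rule AE_alph[OF psd sd fin cylf lam ev one])
  have "AE y in \<mu>. \<forall>i. shiftm b y i \<in> Alph" for b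
    using aed[of b] by (subst (asm) AE_distr_iff[OF meas pred_all_alph])
  hence "AE y in \<mu>. \<forall>b. \<forall>i. shiftm b y i \<in> Alph" by (subst AE_all_countable) auto
  thus "AE y in \<mu>. \<forall>k. y k \<in> Alph"
  proof (eventually_elim)
    case (elim y)
    show ?case
    proof
      fix k
      have "shiftm k y 0 \<in> Alph" using elim by blast
      thus "y k \<in> Alph" by (simp add: shiftm_def)
    qed
  qed
  have aep: "AE x in \<mu>p. \<forall>i. x i \<in> Alph" by (rule mu_plus_facts[OF fin lam ev one mp])
  show "distr \<mu> seq_space_plus (shiftm a) = \<mu>p"
  proof (rule seq_measure_eqI[OF psd psp sd sps])
    fix w
    show "emeasure (distr \<mu> seq_space_plus (shiftm a)) (cyl w) = emeasure \<mu>p (cyl w)"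
    proof (cases "set w \<subseteq> Alph")
      case True
      have "measure \<mu>p (cyl w) = (1 / lam) ^ length w * (vL \<bullet> (word_matrix E lab w *v vR))"
        using mp True spp unfolding is_mu_plus_def cyl_def by auto
      interpret A: prob_space "distr \<mu> seq_space_plus (shiftm a)" by (rule psd)
      interpret B: prob_space \<mu>p by (rule psp)
      show ?thesis using cylf[OF True, of a] \<open>measure \<mu>p (cyl w) = _\<close>
        by (simp add: A.emeasure_eq_measure B.emeasure_eq_measure)
    next
      case False
      show ?thesis using cyl_null[OF psd sd aed False] cyl_null[OF psp sps aep False] by simp
    qed
  qed
qed

lemma phi_plus_meas: "phi_plus \<beta> \<in> borel_measurable seq_space_plus"
  unfolding phi_plus_def[abs_def] seq_space_plus_def by measurable

lemma partial_series_meas: "(\<lambda>x. partial_series \<beta> x m n) \<in> borel_measurable seq_space"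
  unfolding partial_series_def seq_space_def by measurable

definition clacos :: "real \<Rightarrow> real" where "clacos x = arccos (max (-1) (min 1 x))"

lemma clacos_meas: "clacos \<in> borel_measurable borel"
proof (rule borel_measurable_continuous_onI)
  have "continuous_on UNIV (\<lambda>x::real. max (-1) (min 1 x))" by (intro continuous_intros)
  moreover have "(\<lambda>x::real. max (-1) (min 1 x)) ` UNIV \<subseteq> {-1..1}" by auto
  ultimately show "continuous_on UNIV clacos" unfolding clacos_def
    by (rule continuous_on_compose2[OF continuous_on_arccos'])
qed

definition theta :: "complex \<Rightarrow> real" where
  "theta w = (if 0 \<le> Im w then clacos (Re w) else 2 * pi - clacos (Re w)) / (2 * pi)"

lemma theta_meas: "theta \<in> borel_measurable borel"
  unfolding theta_def using clacos_meas by measurable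

lemma theta_props:
  assumes "cmod w = 1"
  shows "0 \<le> theta w \<and> theta w < 1 \<and> cis (2 * pi * theta w) = w"
proof -
  have sq: "(Re w)\<^sup>2 + (Im w)\<^sup>2 = 1" using assms unfolding cmod_def by simp
  hence rb: "-1 \<le> Re w" "Re w \<le> 1"
    by (smt (verit) zero_le_power2 abs_le_square_iff abs_le_iff power_one)+
  have cl: "clacos (Re w) = arccos (Re w)" unfolding clacos_def using rb by simp
  define a where "a = arccos (Re w)"
  have a: "0 \<le> a" "a \<le> pi" using arccos_bounded[OF rb] unfolding a_def by auto
  have ca: "cos a = Re w" unfolding a_def using rb by simp
  have sa: "sin a = \<bar>Im w\<bar>"
  proof -
    have "sin a = sqrt (1 - (Re w)\<^sup>2)" unfolding a_def by (rule sin_arccos[OF rb])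
    also have "1 - (Re w)\<^sup>2 = (Im w)\<^sup>2" using sq by simp
    finally show ?thesis by simp
  qed
  show ?thesis
  proof (cases "0 \<le> Im w")
    case True
    have th: "theta w = a / (2 * pi)" unfolding theta_def cl a_def using True by simp
    have "cis (2 * pi * theta w) = cis a" unfolding th by simp
    also have "\<dots> = w" using ca sa True by (simp add: complex_eq_iff)
    moreover have "0 \<le> theta w" unfolding th using a by simp
    moreover have "a < 2 * pi" using a pi_gt_zero by linarith
    hence "theta w < 1" unfolding th using pi_gt_zero by (simp add: pos_divide_less_eq)
    ultimately show ?thesis by simp
  next
    case False
    have th: "theta w = (2 * pi - a) / (2 * pi)" unfolding theta_def cl a_def using False by simp
    have "Re w \<noteq> 1" using False sq by auto
    hence "a \<noteq> 0" unfolding a_def using rb arccos_eq_0_iff by auto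
    hence apos: "a > 0" using a by simp
    have "cis (2 * pi * theta w) = cis (2 * pi - a)" unfolding th by simp
    also have "\<dots> = w" using ca sa False by (simp add: complex_eq_iff cos_diff sin_diff)
    moreover have "0 \<le> theta w" unfolding th using a pi_gt_zero by simp
    moreover have "theta w < 1" unfolding th using apos pi_gt_zero by (simp add: pos_divide_less_eq)
    ultimately show ?thesis by simp
  qed
qed

lemma Phi_coord_eq:
  "Phi_coord \<beta> x m =
     (if Cauchy (\<lambda>n. cis (2 * pi * partial_series \<beta> x m n))
      then theta (lim (\<lambda>n. cis (2 * pi * partial_series \<beta> x m n))) else (THE t. False))"
proof -
  define g where "g n = cis (2 * pi * partial_series \<beta> x m n)" for n
  show ?thesis
  proof (cases "Cauchy g")
    case True
    hence "convergent g" by (rule Cauchy_convergent)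
    hence gl: "g \<longlonglongrightarrow> lim g" by (simp add: convergent_LIMSEQ_iff)
    have "(\<lambda>n. norm (g n)) \<longlonglongrightarrow> norm (lim g)" by (intro tendsto_intros gl)
    moreover have "(\<lambda>n. norm (g n)) = (\<lambda>n. 1)" by (simp add: g_def)
    ultimately have n1: "cmod (lim g) = 1" using LIMSEQ_unique tendsto_const by metis
    have P: "(0 \<le> t \<and> t < 1 \<and> converges_mod1 (partial_series \<beta> x m) t) \<longleftrightarrow> (0 \<le> t \<and> t < 1 \<and> cis (2 * pi * t) = lim g)" for t
      unfolding converges_mod1_def g_def[symmetric] using gl LIMSEQ_unique by metis
    have "Phi_coord \<beta> x m = theta (lim g)"
      unfolding Phi_coord_def P
    proof (rule the_equality)
      show "0 \<le> theta (lim g) \<and> theta (lim g) < 1 \<and> cis (2 * pi * theta (lim g)) = lim g"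
        by (rule theta_props[OF n1])
      fix t assume "0 \<le> t \<and> t < 1 \<and> cis (2 * pi * t) = lim g"
      thus "t = theta (lim g)" using theta_props[OF n1] cis_unique01 by metis
    qed
    thus ?thesis using True unfolding g_def by simp
  next
    case False
    have "\<not> (0 \<le> t \<and> t < 1 \<and> converges_mod1 (partial_series \<beta> x m) t)" for t
      using False unfolding converges_mod1_def g_def[symmetric]
      by (metis convergentI convergent_Cauchy)
    hence "(\<lambda>t. 0 \<le> t \<and> t < 1 \<and> converges_mod1 (partial_series \<beta> x m) t) = (\<lambda>t. False)" by auto
    thus ?thesis using False unfolding Phi_coord_def g_def by simp
  qed
qed

lemma Phi_coord_meas: "(\<lambda>x. Phi_coord \<beta> x m) \<in> borel_measurable seq_space"
proof -
  have [measurable]: "(\<lambda>x. partial_series \<beta> x m n) \<in> borel_measurable seq_space" for n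
    by (rule partial_series_meas)
  note [measurable] = theta_meas
  have cm: "cis \<in> borel_measurable borel"
    by (rule borel_measurable_continuous_onI) (intro continuous_intros)
  have [measurable]: "(\<lambda>x. cis (2 * pi * partial_series \<beta> x m n)) \<in> borel_measurable seq_space" for n
    by (rule measurable_compose[OF _ cm]) measurable
  show ?thesis unfolding Phi_coord_eq by measurable
qed

lemma shift_identity:
  assumes b1: "\<beta> > 1" and bnd: "\<And>k. \<bar>y k\<bar> \<le> B"
  shows "phi_plus \<beta> (shiftm (- int n) y) * (\<beta> ^ l * \<beta> ^ Suc n) = partial_series \<beta> y l n"
proof -
  define x where "x = shiftm (- int n) y"
  have x: "x i = y (int i - int n)" for i by (simp add: x_def shiftm_def)
  have b0: "\<beta> \<noteq> 0" using b1 by simp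
  define K where "K = \<beta> ^ l * \<beta> ^ Suc n"
  define g where "g i = of_int (x i) * \<beta> powi (- int (Suc i))" for i
  define f where "f i = of_int (x i) * \<beta> powi (int l + int n - int i)" for i
  have fg: "f i = g i * K" for i
  proof -
    have "\<beta> powi (- int (Suc i)) * K = \<beta> powi (- int (Suc i)) * \<beta> powi (int l + int (Suc n))"
      unfolding K_def by (simp add: power_int_add b0 power_add)
    also have "\<dots> = \<beta> powi (- int (Suc i) + (int l + int (Suc n)))" by (subst power_int_add) (use b0 in auto)
    also have "- int (Suc i) + (int l + int (Suc n)) = int l + int n - int i" by simp
    finally have e: "\<beta> powi (- int (Suc i)) * K = \<beta> powi (int l + int n - int i)" .
    show ?thesis unfolding f_def g_def mult.assoc e ..
  qed
  have B0: "0 \<le> real_of_int B" using bnd[of 0] by linarith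
  have ng: "norm (g i) \<le> of_int B * (1 / \<beta>) ^ i" for i
  proof -
    have "norm (g i) = \<bar>of_int (x i)\<bar> * \<beta> powi (- int (Suc i))"
      unfolding g_def using b1 by (simp add: abs_mult)
    also have "\<beta> powi (- int (Suc i)) = (1 / \<beta>) ^ Suc i"
      unfolding power_int_minus power_int_of_nat by (simp add: power_one_over inverse_eq_divide)
    also have "\<dots> \<le> (1 / \<beta>) ^ i" using b1 by (simp add: power_le_one field_simps)
    finally have "norm (g i) \<le> \<bar>of_int (x i)\<bar> * (1 / \<beta>) ^ i"
      by (rule order_trans) (intro mult_left_mono order.refl, auto)
    also have "\<dots> \<le> of_int B * (1 / \<beta>) ^ i"
      using bnd[of "int i - int n"] b1 unfolding x by (intro mult_right_mono) (auto simp del: of_int_abs simp add: of_int_abs[symmetric])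
    finally show ?thesis .
  qed
  have sg: "summable g"
    by (rule summable_comparison_test[OF _ summable_mult[OF summable_geometric]]) (use ng b1 in auto)
  have sf: "summable f" unfolding fg by (rule summable_mult2[OF sg])
  have "phi_plus \<beta> x * K = suminf f"
    unfolding phi_plus_def fg using suminf_mult2[OF sg] unfolding g_def by simp
  also have "\<dots> = (\<Sum>i. f (i + Suc n)) + (\<Sum>i<Suc n. f i)"
    by (rule suminf_split_initial_segment[OF sf])
  also have "(\<Sum>i. f (i + Suc n)) = (\<Sum>i. of_int (y (int (Suc i))) * \<beta> powi (int l - int (Suc i)))"
  proof (rule suminf_cong)
    fix i
    have e: "int (i + Suc n) - int n = int (Suc i)" "int l + int n - int (i + Suc n) = int l - int (Suc i)" by simp_all
    show "f (i + Suc n) = of_int (y (int (Suc i))) * \<beta> powi (int l - int (Suc i))"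
      unfolding f_def x e ..
  qed
  also have "(\<Sum>i<Suc n. f i) = (\<Sum>j<Suc n. f (n - j))"
    using sum.nat_diff_reindex[of "\<lambda>i. f i" "Suc n"] by simp
  also have "\<dots> = (\<Sum>j\<le>n. of_int (y (- int j)) * \<beta> powi (int l - (- int j)))"
    unfolding lessThan_Suc_atMost
  proof (rule sum.cong[OF refl])
    fix j assume "j \<in> {..n}"
    hence e: "int (n - j) - int n = - int j" "int l + int n - int (n - j) = int l - (- int j)" by auto
    show "f (n - j) = of_int (y (- int j)) * \<beta> powi (int l - (- int j))" unfolding f_def x e ..
  qed
  also have "\<dots> = (\<Sum>k\<in>{- int n..0}. of_int (y k) * \<beta> powi (int l - k))"
    by (rule sum_neg_int_reindex[symmetric])
  finally show ?thesis unfolding partial_series_def x_def K_def by simp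
qed

lemma cis_meas: "cis \<in> borel_measurable borel"
  by (rule borel_measurable_continuous_onI) (intro continuous_intros)

lemma space_torus: "space (torus r) = (\<Pi>\<^sub>E j\<in>{..<r}. {0..<1})"
  by (simp add: torus_def space_PiM space_restrict_space)

lemma torus_comp_meas: "j < r \<Longrightarrow> (\<lambda>t. t j) \<in> borel_measurable (torus r)"
proof -
  assume j: "j < r"
  have "(\<lambda>t. t j) \<in> measurable (torus r) (restrict_space lborel {0..<1})"
    unfolding torus_def by (rule measurable_component_singleton) (use j in simp)
  moreover have "(\<lambda>x. x) \<in> measurable (restrict_space lborel {0..<(1::real)}) borel"
    by (rule measurable_restrict_space1) simp
  ultimately show ?thesis by (rule measurable_compose)
qed

lemma torus_rhs:
  fixes \<mu> :: "(int \<Rightarrow> int) measure"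
  assumes ps: "prob_space \<mu>" and s\<mu>: "sets \<mu> = sets seq_space"
    and ae: "AE y in \<mu>. \<forall>l<r. 0 \<le> Phi_coord \<beta> y l \<and> Phi_coord \<beta> y l < 1"
  shows "torus_fourier_coeff r (distr \<mu> (torus r) (Phi \<beta> r)) m
       = (\<integral>y. cis (- 2 * pi * (\<Sum>j<r. of_int (m j) * Phi_coord \<beta> y j)) \<partial>\<mu>)"
proof -
  have sp: "space \<mu> = UNIV" using s\<mu> by (simp add: sets_eq_imp_space_eq space_seq_space)
  define S where "S = {y. \<forall>j<r. 0 \<le> Phi_coord \<beta> y j \<and> Phi_coord \<beta> y j < 1}"
  define Phi' where "Phi' y = (\<lambda>j\<in>{..<r}. if y \<in> S then Phi_coord \<beta> y j else 0)" for y
  have PCm[measurable]: "(\<lambda>x. Phi_coord \<beta> x j) \<in> borel_measurable \<mu>" for j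
    using Phi_coord_meas[of \<beta> j] by (subst measurable_cong_sets[OF s\<mu> refl])
  have Sm: "S \<in> sets \<mu>"
  proof -
    have "{y \<in> space \<mu>. \<forall>j<r. 0 \<le> Phi_coord \<beta> y j \<and> Phi_coord \<beta> y j < 1} \<in> sets \<mu>" by measurable
    thus ?thesis unfolding S_def sp by simp
  qed
  have Phi'm: "Phi' \<in> measurable \<mu> (torus r)"
    unfolding torus_def Phi'_def
  proof (rule measurable_PiM_single')
    fix j assume j: "j \<in> {..<r}"
    have "(\<lambda>y. if y \<in> S then Phi_coord \<beta> y j else 0) \<in> borel_measurable \<mu>"
      using Sm by measurable
    moreover have "(\<lambda>y. if y \<in> S then Phi_coord \<beta> y j else 0) \<in> space \<mu> \<rightarrow> {0..<1}"
      using j unfolding S_def by auto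
    ultimately show "(\<lambda>y. (\<lambda>j\<in>{..<r}. if y \<in> S then Phi_coord \<beta> y j else 0) j) \<in> measurable \<mu> (restrict_space lborel {0..<1})"
      using j by (auto intro!: measurable_restrict_space2)
  next
    show "(\<lambda>y. \<lambda>j\<in>{..<r}. if y \<in> S then Phi_coord \<beta> y j else 0) \<in> space \<mu> \<rightarrow> (\<Pi>\<^sub>E i\<in>{..<r}. space (restrict_space lborel {0..<1}))"
      unfolding S_def by (auto simp: space_restrict_space)
  qed
  have aeS: "AE y in \<mu>. y \<in> S" using ae unfolding S_def by simp
  have PhiS: "Phi \<beta> r y = Phi' y" if "y \<in> S" for y
    using that unfolding Phi_def Phi'_def by simp
  have deq: "distr \<mu> (torus r) (Phi \<beta> r) = distr \<mu> (torus r) Phi'"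
    unfolding distr_def
  proof (rule measure_of_eq)
    show "sets (torus r) \<subseteq> Pow (space (torus r))" by (rule sets.space_closed)
    fix A assume "A \<in> sigma_sets (space (torus r)) (sets (torus r))"
    hence A: "A \<in> sets (torus r)" by (simp add: sets.sigma_sets_eq)
    have Asub: "A \<subseteq> space (torus r)" using A by (rule sets.sets_into_space)
    have e1: "Phi \<beta> r -` A \<inter> space \<mu> = (Phi' -` A \<inter> space \<mu>) \<inter> S"
    proof (intro equalityI subsetI)
      fix y assume y: "y \<in> Phi \<beta> r -` A \<inter> space \<mu>"
      hence "Phi \<beta> r y \<in> space (torus r)" using Asub by auto
      hence "y \<in> S" unfolding space_torus S_def Phi_def by (auto simp: PiE_iff)
      thus "y \<in> (Phi' -` A \<inter> space \<mu>) \<inter> S" using y PhiS by auto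
    qed (use PhiS in auto)
    have m1: "Phi' -` A \<inter> space \<mu> \<in> sets \<mu>" by (rule measurable_sets[OF Phi'm A])
    show "emeasure \<mu> (Phi \<beta> r -` A \<inter> space \<mu>) = emeasure \<mu> (Phi' -` A \<inter> space \<mu>)"
      unfolding e1 by (rule emeasure_eq_AE) (use aeS m1 Sm in auto)
  qed
  have intm: "(\<lambda>t. cis (- 2 * pi * (\<Sum>j<r. of_int (m j) * t j))) \<in> borel_measurable (torus r)"
    using torus_comp_meas cis_meas by measurable
  have "torus_fourier_coeff r (distr \<mu> (torus r) (Phi \<beta> r)) m
      = (\<integral>y. cis (- 2 * pi * (\<Sum>j<r. of_int (m j) * Phi' y j)) \<partial>\<mu>)"
    unfolding torus_fourier_coeff_def deq by (rule integral_distr[OF Phi'm intm])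
  also have "\<dots> = (\<integral>y. cis (- 2 * pi * (\<Sum>j<r. of_int (m j) * Phi_coord \<beta> y j)) \<partial>\<mu>)"
  proof (rule integral_cong_AE)
    show "(\<lambda>y. cis (- 2 * pi * (\<Sum>j<r. of_int (m j) * Phi' y j))) \<in> borel_measurable \<mu>"
      by (rule measurable_compose[OF Phi'm intm])
    show "(\<lambda>y. cis (- 2 * pi * (\<Sum>j<r. of_int (m j) * Phi_coord \<beta> y j))) \<in> borel_measurable \<mu>"
      using cis_meas by measurable
    show "AE y in \<mu>. cis (- 2 * pi * (\<Sum>j<r. of_int (m j) * Phi' y j)) = cis (- 2 * pi * (\<Sum>j<r. of_int (m j) * Phi_coord \<beta> y j))"
      using aeS by eventually_elim (simp add: Phi'_def)
  qed
  finally show ?thesis .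
qed

lemma cis_sum_prod:
  "cis (- 2 * pi * (\<Sum>l\<in>A. of_int (m l) * a l)) = (\<Prod>l\<in>A. cis (2 * pi * a l) powi (- m l))"
proof (induction A rule: infinite_finite_induct)
  case (insert x F)
  have "cis (- 2 * pi * (\<Sum>l\<in>insert x F. of_int (m l) * a l))
      = cis (- 2 * pi * (of_int (m x) * a x) + - 2 * pi * (\<Sum>l\<in>F. of_int (m l) * a l))"
    using insert by (simp add: distrib_left)
  also have "\<dots> = cis (- 2 * pi * (of_int (m x) * a x)) * cis (- 2 * pi * (\<Sum>l\<in>F. of_int (m l) * a l))"
    by (rule cis_mult[symmetric])
  also have "cis (- 2 * pi * (of_int (m x) * a x)) = cis (2 * pi * a x) powi (- m x)"
    by (simp add: cis_power_int algebra_simps)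
  finally show ?case using insert by simp
qed simp_all

theorem theorem12:
  fixes Alph :: "int set"
    and E :: "('v::finite \<times> 'v) set"
    and lab :: "'v \<times> 'v \<Rightarrow> int"
    and lam :: real and vL vR :: "real^'v"
    and \<beta> :: real and r :: nat
    and \<mu>p :: "(nat \<Rightarrow> int) measure" and \<mu> :: "(int \<Rightarrow> int) measure"
    and m :: "nat \<Rightarrow> int"
  assumes "finite Alph"
    and "\<forall>e\<in>E. lab e \<in> Alph"
    and "primitive_matrix (total_matrix Alph E lab)"
    and "lam > 0"
    and "\<forall>i. vL $ i > 0" and "\<forall>i. vR $ i > 0"
    and "vL v* total_matrix Alph E lab = lam *\<^sub>R vL"
    and "total_matrix Alph E lab *v vR = lam *\<^sub>R vR"
    and "vL \<bullet> vR = 1"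
    and "pisot_of_degree \<beta> r"
    and "is_mu_plus Alph E lab lam vL vR \<mu>p"
    and "is_mu Alph E lab lam vL vR \<mu>"
  shows "(\<lambda>k. fourier_transform (distr \<mu>p lborel (phi_plus \<beta>))
                 ((\<Sum>j<r. of_int (m j) * \<beta> ^ j) * \<beta> ^ k))
           \<longlonglongrightarrow> torus_fourier_coeff r (distr \<mu> (torus r) (Phi \<beta> r)) m"
proof -
  note fin = assms(1) and lam = assms(4) and ev = assms(8) and one = assms(9)
    and pis = assms(10) and mp = assms(11) and mu = assms(12)
  have b1: "\<beta> > 1" using pis unfolding pisot_of_degree_def by auto
  have ps: "prob_space \<mu>" and s\<mu>: "sets \<mu> = sets seq_space" using mu by (auto simp: is_mu_def)
  have sp: "space \<mu> = UNIV" using s\<mu> by (simp add: sets_eq_imp_space_eq space_seq_space)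
  have psp: "prob_space \<mu>p" and sps: "sets \<mu>p = sets seq_space_plus" using mp by (auto simp: is_mu_plus_def)
  interpret P: prob_space \<mu> by (rule ps)
  have aeA: "AE y in \<mu>. \<forall>k. y k \<in> Alph" by (rule mu_facts(1)[OF fin lam ev one mp mu])
  have dist: "distr \<mu> seq_space_plus (shiftm a) = \<mu>p" for a by (rule mu_facts(2)[OF fin lam ev one mp mu])
  define B where "B = Max (insert 0 (abs ` Alph))"
  have bndA: "\<bar>y k\<bar> \<le> B" if "\<forall>k. y k \<in> Alph" for y :: "int \<Rightarrow> int" and k
    unfolding B_def using fin that by (intro Max_ge) auto
  define z where "z = (\<Sum>j<r. of_int (m j) * \<beta> ^ j)"
  define F where "F y = cis (- 2 * pi * (\<Sum>l<r. of_int (m l) * Phi_coord \<beta> y l))" for y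
  define s where "s n y = cis (- 2 * pi * phi_plus \<beta> (shiftm (- int n) y) * (z * \<beta> ^ Suc n))" for n y
  have shm: "shiftm a \<in> measurable \<mu> seq_space_plus" for a by (rule shiftm_meas[OF s\<mu>])
  have ppm: "phi_plus \<beta> \<in> borel_measurable seq_space_plus" by (rule phi_plus_meas)
  have ppm': "phi_plus \<beta> \<in> measurable \<mu>p lborel"
    using ppm by (subst measurable_cong_sets[OF sps refl]) simp
  have gm: "(\<lambda>x. cis (- 2 * pi * x * t)) \<in> borel_measurable lborel" for t
    using cis_meas by measurable
  have gm2: "(\<lambda>x. cis (- 2 * pi * phi_plus \<beta> x * t)) \<in> borel_measurable seq_space_plus" for t
    using cis_meas ppm by measurable
  have LHS: "fourier_transform (distr \<mu>p lborel (phi_plus \<beta>)) (z * \<beta> ^ Suc n) = integral\<^sup>L \<mu> (s n)" for n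
  proof -
    have "fourier_transform (distr \<mu>p lborel (phi_plus \<beta>)) (z * \<beta> ^ Suc n)
        = (\<integral>x. cis (- 2 * pi * phi_plus \<beta> x * (z * \<beta> ^ Suc n)) \<partial>\<mu>p)"
      unfolding fourier_transform_def by (rule integral_distr[OF ppm' gm])
    also have "\<dots> = (\<integral>x. cis (- 2 * pi * phi_plus \<beta> x * (z * \<beta> ^ Suc n)) \<partial>distr \<mu> seq_space_plus (shiftm (- int n)))"
      by (simp add: dist)
    also have "\<dots> = integral\<^sup>L \<mu> (s n)"
      unfolding s_def by (rule integral_distr[OF shm gm2])
    finally show ?thesis .
  qed
  have aeconv: "AE y in \<mu>. (\<forall>l. 0 \<le> Phi_coord \<beta> y l \<and> Phi_coord \<beta> y l < 1 \<and>
        converges_mod1 (partial_series \<beta> y l) (Phi_coord \<beta> y l)) \<and>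
        (\<forall>n. s n y = cis (- 2 * pi * (\<Sum>l<r. of_int (m l) * partial_series \<beta> y l n)))"
    using aeA
  proof eventually_elim
    case (elim y)
    have bnd: "\<And>k. \<bar>y k\<bar> \<le> B" using bndA[OF elim] .
    have c1: "\<forall>l. 0 \<le> Phi_coord \<beta> y l \<and> Phi_coord \<beta> y l < 1 \<and>
        converges_mod1 (partial_series \<beta> y l) (Phi_coord \<beta> y l)"
    proof
      fix l
      have "\<exists>L. converges_mod1 (partial_series \<beta> y l) L"
        by (rule partial_series_conv_mod1[OF pis]) (rule bnd)
      then obtain L where "converges_mod1 (partial_series \<beta> y l) L" by blast
      from converges_mod1_THE[OF this] show "0 \<le> Phi_coord \<beta> y l \<and> Phi_coord \<beta> y l < 1 \<and>
        converges_mod1 (partial_series \<beta> y l) (Phi_coord \<beta> y l)"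
        unfolding Phi_coord_def by blast
    qed
    have c2: "s n y = cis (- 2 * pi * (\<Sum>l<r. of_int (m l) * partial_series \<beta> y l n))" for n
    proof -
      have "phi_plus \<beta> (shiftm (- int n) y) * (z * \<beta> ^ Suc n)
          = (\<Sum>l<r. of_int (m l) * (phi_plus \<beta> (shiftm (- int n) y) * (\<beta> ^ l * \<beta> ^ Suc n)))"
        unfolding z_def by (simp add: sum_distrib_left sum_distrib_right algebra_simps)
      also have "\<dots> = (\<Sum>l<r. of_int (m l) * partial_series \<beta> y l n)"
        by (intro sum.cong refl) (simp only: shift_identity[OF b1 bnd])
      finally show ?thesis unfolding s_def by (simp add: mult.assoc)
    qed
    show ?case using c1 c2 by blast
  qed
  have aelim: "AE y in \<mu>. (\<lambda>n. s n y) \<longlonglongrightarrow> F y"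
    using aeconv
  proof eventually_elim
    case (elim y)
    have "(\<lambda>n. \<Prod>l<r. cis (2 * pi * partial_series \<beta> y l n) powi (- m l))
        \<longlonglongrightarrow> (\<Prod>l<r. cis (2 * pi * Phi_coord \<beta> y l) powi (- m l))"
    proof (intro tendsto_prod tendsto_power_int)
      fix l
      show "(\<lambda>n. cis (2 * pi * partial_series \<beta> y l n)) \<longlonglongrightarrow> cis (2 * pi * Phi_coord \<beta> y l)"
        using elim unfolding converges_mod1_def by blast
      show "cis (2 * pi * Phi_coord \<beta> y l) \<noteq> 0" by simp
    qed
    thus ?case using elim unfolding F_def cis_sum_prod by simp
  qed
  have sm: "s n \<in> borel_measurable \<mu>" for n
    unfolding s_def by (rule measurable_compose[OF shm gm2])
  have Fm: "F \<in> borel_measurable \<mu>"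
  proof -
    have [measurable]: "(\<lambda>x. Phi_coord \<beta> x j) \<in> borel_measurable \<mu>" for j
      using Phi_coord_meas[of \<beta> j] by (subst measurable_cong_sets[OF s\<mu> refl])
    show ?thesis unfolding F_def using cis_meas by measurable
  qed
  have DCT: "(\<lambda>n. integral\<^sup>L \<mu> (s n)) \<longlonglongrightarrow> integral\<^sup>L \<mu> F"
    by (rule integral_dominated_convergence[OF Fm sm _ aelim, where w="\<lambda>_. 1"])
       (auto simp: s_def)
  have RHS: "torus_fourier_coeff r (distr \<mu> (torus r) (Phi \<beta> r)) m = integral\<^sup>L \<mu> F"
    unfolding F_def by (rule torus_rhs[OF ps s\<mu>]) (use aeconv in \<open>eventually_elim, auto\<close>)
  have "(\<lambda>n. fourier_transform (distr \<mu>p lborel (phi_plus \<beta>)) (z * \<beta> ^ Suc n))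
      \<longlonglongrightarrow> torus_fourier_coeff r (distr \<mu> (torus r) (Phi \<beta> r)) m"
    unfolding LHS RHS by (rule DCT)
  thus ?thesis unfolding z_def by (rule LIMSEQ_imp_Suc)
qed

end
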